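(* Let $C$ be a field of characteristic zero. Let $L=\sum_{k=0}^{r_L} l_k(x)\partial^k\in C[x][\partial]$ be an operator of order $r_L$ whose coefficients $l_k\in C[x]$ have degree at most $d_L$, and let $P\in C[x,y]$ with $\deg_y P=r_P$, $\deg_x P=d_P$, such that $P$ is square-free as an element of $C(x)[y]$ and has no non-constant divisor in $\bar C[y]$. Let $r,d\in\mathbb N$ be such that \[ r\ge r_Lr_P\quad\text{and}\quad d\ge \frac{r(3r_P+d_L-1)d_Pr_Lr_P}{r+1-r_Lr_P}. \] Then there exists an operator $M\in C[x][\partial]$ of order at most $r$ and degree at most $d$ such that for every solution $g$ of $P$ and every solution $f$ of $L$ the composition $f\circ g$ is a solution of $M$. In particular, there is such an operator $M$ of order $r_Lr_P$ and degree $(3r_P+d_L-1)d_Pr_L^2r_P^2$.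
   Context: $C[x][\partial]$ is the ring of linear differential operators with polynomial coefficients, with $\partial x=x\partial+1$; the degree of an operator is the maximum degree of its polynomial coefficients. $\bar C$ is an algebraic closure of $C$. A solution of $P$ is a $g$ with $P(x,g(x))=0$; a solution of $L$ is an $f$ with $L(f)=0$. Compositions are understood as follows: for every $\alpha\in C$, every solution $g\in C[[x-\alpha]]$ of $P$ and every solution $f\in C[[x-g(\alpha)]]$ of $L$, the composition $f\circ g\in C[[x-\alpha]]$ (for $C=\mathbb C$ this coincides with composition of analytic functions). *)

theory Defs
  imports "HOL-Algebra.Algebraic_Closure_Type"
          "HOL-Computational_Algebra.Computational_Algebra"
          "HOL-Computational_Algebra.Fraction_Field"
begin

text \<open>
  A bivariate polynomial P in C[x,y] is an element of "'a poly poly":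
  a polynomial in y whose coefficients are polynomials in x, i.e.
  P(x,y) = sum_j (coeff P j)(x) * y^j.
  A differential operator L = sum_k l_k(x) d^k in C[x][d] is stored by its
  (unique) normal-form coefficient sequence, also as an "'a poly poly" used
  purely as a finite coefficient container: coeff L k = l_k.  (No product
  of operators is ever used, so the commutative ring structure of
  "'a poly poly" plays no role.)
  A power series in C[[x - a]] is an "'a fps" in the variable t = x - a.
\<close>

type_synonym 'a diffop = "'a poly poly"

definition op_order :: "'a::zero diffop \<Rightarrow> nat" where
  "op_order L = degree L"

definition op_degree :: "'a::zero diffop \<Rightarrow> nat" where
  "op_degree L = Max {degree (coeff L k) | k. k \<le> degree L}"

definition deg_y :: "'a::zero poly poly \<Rightarrow> nat" where
  "deg_y P = degree P"

definition deg_x :: "'a::zero poly poly \<Rightarrow> nat" where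
  "deg_x P = Max {degree (coeff P j) | j. j \<le> degree P}"

definition poly_at :: "'a::comm_ring_1 \<Rightarrow> 'a poly \<Rightarrow> 'a fps" where
  "poly_at a p = fps_of_poly (pcompose p [:a, 1:])"

definition apply_op :: "'a::comm_ring_1 \<Rightarrow> 'a diffop \<Rightarrow> 'a fps \<Rightarrow> 'a fps" where
  "apply_op b L f = (\<Sum>k\<le>degree L. poly_at b (coeff L k) * (fps_deriv ^^ k) f)"

definition op_solution :: "'a::comm_ring_1 \<Rightarrow> 'a diffop \<Rightarrow> 'a fps \<Rightarrow> bool" where
  "op_solution b L f \<longleftrightarrow> apply_op b L f = 0"

definition alg_solution :: "'a::comm_ring_1 \<Rightarrow> 'a poly poly \<Rightarrow> 'a fps \<Rightarrow> bool" where
  "alg_solution a P g \<longleftrightarrow> (\<Sum>j\<le>degree P. poly_at a (coeff P j) * g ^ j) = 0"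

text \<open>composition f o g in C[[x-a]] of g in C[[x-a]] with f in C[[x - g(a)]]\<close>
definition comp_at :: "'a::field fps \<Rightarrow> 'a fps \<Rightarrow> 'a fps" where
  "comp_at f g = fps_compose f (g - fps_const (fps_nth g 0))"

definition squarefree_over_Cx :: "'a::field poly poly \<Rightarrow> bool" where
  "squarefree_over_Cx P \<longleftrightarrow> squarefree (map_poly to_fract P)"

definition no_y_divisor :: "'a::field poly poly \<Rightarrow> bool" where
  "no_y_divisor P \<longleftrightarrow>
     \<not> (\<exists>q :: 'a alg_closure poly. degree q > 0 \<and>
          map_poly (\<lambda>c. [:c:]) q dvd map_poly (map_poly to_ac) P)"

end

theory Submission
  imports Defs
begin


lemma poly_at_0[simp]: "poly_at a 0 = 0"
  by (simp add: poly_at_def)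
lemma poly_at_add[simp]: "poly_at a (p+q) = poly_at a p + poly_at a q"
  by (simp add: poly_at_def pcompose_add fps_of_poly_add)
lemma poly_at_diff[simp]: "poly_at a (p-q) = poly_at a p - poly_at a q"
  by (simp add: poly_at_def pcompose_diff fps_of_poly_diff)
lemma poly_at_uminus[simp]: "poly_at a (-p) = - poly_at a p"
  by (simp add: poly_at_def pcompose_uminus fps_of_poly_uminus)
lemma poly_at_mult[simp]: "poly_at a (p*q) = poly_at a p * poly_at a q"
  by (simp add: poly_at_def pcompose_mult fps_of_poly_mult)
lemma poly_at_const[simp]: "poly_at a [:c:] = fps_const c"
  by (simp add: poly_at_def fps_of_poly_const)
lemma poly_at_1[simp]: "poly_at a 1 = 1"
  by (simp add: poly_at_def pcompose_1)
lemma poly_at_pderiv: "poly_at a (pderiv p) = fps_deriv (poly_at a p)"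
  by (simp add: poly_at_def pderiv_pcompose fps_of_poly_pderiv[symmetric] pderiv_pCons)
lemma poly_at_eq_0_iff[simp]: "(poly_at (a::'a::field) p = 0) \<longleftrightarrow> p = 0"
  by (simp add: poly_at_def fps_of_poly_eq_iff[of _ 0, simplified] pcompose_eq_0_iff)

definition ev :: "'a::field \<Rightarrow> 'a fps \<Rightarrow> 'a poly poly \<Rightarrow> 'a fps" where
  "ev a g Q = poly (map_poly (poly_at a) Q) g"

lemma ev_pCons: "ev a g (pCons c p) = poly_at a c + g * ev a g p"
  by (simp add: ev_def map_poly_pCons)
lemma ev_0[simp]: "ev a g 0 = 0"
  by (simp add: ev_def)
lemma ev_const[simp]: "ev a g [:c:] = poly_at a c"
  using ev_pCons[of a g c 0] by (simp add: ev_def)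
lemma ev_1[simp]: "ev a g 1 = 1"
  by (simp add: ev_def)
lemma ev_add[simp]: "ev a g (p+q) = ev a g p + ev a g q"
proof (induction p arbitrary: q)
  case 0 then show ?case by simp
next
  case (pCons c p)
  show ?case
  proof (cases q)
    case (pCons d q')
    then show ?thesis using pCons.IH[of q'] by (simp add: ev_pCons algebra_simps)
  qed
qed
lemma ev_uminus[simp]: "ev a g (-p) = - ev a g p"
  by (induction p) (simp_all add: ev_pCons)
lemma ev_diff[simp]: "ev a g (p-q) = ev a g p - ev a g q"
  using ev_add[of a g p "-q"] by simp
lemma ev_smult[simp]: "ev a g (smult c q) = poly_at a c * ev a g q"
  by (induction q) (simp_all add: ev_pCons algebra_simps)
lemma ev_mult[simp]: "ev a g (p*q) = ev a g p * ev a g q"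
  by (induction p) (simp_all add: ev_pCons algebra_simps)
lemma ev_power[simp]: "ev a g (p^n) = ev a g p ^ n"
  by (induction n) simp_all
lemma ev_sum[simp]: "ev a g (sum f A) = (\<Sum>x\<in>A. ev a g (f x))"
  by (induction A rule: infinite_finite_induct) simp_all
lemma ev_of_nat[simp]: "ev a g (of_nat n) = of_nat n"
  by (induction n) simp_all

lemma ev_alt: "ev a g Q = (\<Sum>j\<le>degree Q. poly_at a (coeff Q j) * g ^ j)"
  by (simp add: ev_def poly_altdef degree_map_poly coeff_map_poly)

lemma ev_deriv:
  "fps_deriv (ev a g Q) = ev a g (map_poly pderiv Q) + ev a g (pderiv Q) * fps_deriv g"
proof (induction Q)
  case 0 then show ?case by simp
next
  case (pCons c p)
  have "map_poly pderiv (pCons c p) = pCons (pderiv c) (map_poly pderiv p)"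
    by (simp add: map_poly_pCons)
  then show ?case using pCons.IH
    by (simp add: ev_pCons pderiv_pCons poly_at_pderiv algebra_simps)
qed


definition cy :: "'a::zero poly \<Rightarrow> 'a poly poly" where
  "cy l = map_poly (\<lambda>c. [:c:]) l"

lemma ev_cy: "ev a g (cy l) = poly (map_poly fps_const l) g"
  by (induction l) (simp_all add: cy_def map_poly_pCons ev_pCons)

lemma poly_at_compose:
  fixes g :: "'a::field fps"
  shows "poly_at (g$0) p oo (g - fps_const (g$0)) = poly (map_poly fps_const p) g"
proof (induction p)
  case 0 then show ?case by simp
next
  case (pCons c p)
  have pa: "poly_at (g$0) (pCons c p) = fps_const c + (fps_const (g$0) + fps_X) * poly_at (g$0) p"
    by (simp add: poly_at_def pcompose_pCons fps_of_poly_add fps_of_poly_mult fps_of_poly_const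
          fps_of_poly_linear algebra_simps)
  have u0: "(g - fps_const (g$0)) $ 0 = 0" by simp
  show ?case
    unfolding pa using pCons.IH
    by (simp add: fps_compose_add_distrib fps_compose_mult_distrib[OF u0] fps_const_compose
        fps_X_fps_compose_startby0[OF u0] map_poly_pCons)
qed

definition Fk :: "'a::field fps \<Rightarrow> 'a fps \<Rightarrow> nat \<Rightarrow> 'a fps" where
  "Fk f g k = ((fps_deriv ^^ k) f) oo (g - fps_const (g$0))"

lemma Fk_0: "Fk f g 0 = comp_at f g"
  by (simp add: Fk_def comp_at_def)

lemma Fk_deriv: "fps_deriv (Fk f g k) = Fk f g (Suc k) * fps_deriv g"
  unfolding Fk_def by (subst fps_compose_deriv) simp_all

lemma L_relation:
  fixes g :: "'a::field fps"
  assumes "op_solution (g$0) L f"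
  shows "(\<Sum>k\<le>degree L. ev a g (cy (coeff L k)) * Fk f g k) = 0"
proof -
  have u0: "(g - fps_const (g$0)) $ 0 = 0" by simp
  have "apply_op (g$0) L f oo (g - fps_const (g$0)) = 0"
    using assms by (simp add: op_solution_def fps_compose_0)
  then show ?thesis
    by (simp add: apply_op_def fps_compose_sum_distrib fps_compose_mult_distrib[OF u0]
        poly_at_compose ev_cy Fk_def)
qed


instantiation fract ::
  (idom) "{unique_euclidean_ring, normalization_euclidean_semiring, normalization_semidom_multiplicative}"
begin
definition [simp]: "normalize_fract = (normalize_field :: 'a fract \<Rightarrow> _)"
definition [simp]: "unit_factor_fract = (unit_factor_field :: 'a fract \<Rightarrow> _)"
definition [simp]: "modulo_fract = (mod_field :: 'a fract \<Rightarrow> _)"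
definition [simp]: "euclidean_size_fract = (euclidean_size_field :: 'a fract \<Rightarrow> _)"
definition [simp]: "division_segment (x :: 'a fract) = 1"
instance
  by standard
    (simp_all add: dvd_field_iff field_split_simps split: if_splits)
end

instantiation fract :: (idom) euclidean_ring_gcd
begin
definition gcd_fract :: "'a fract \<Rightarrow> 'a fract \<Rightarrow> 'a fract" where
  "gcd_fract = Euclidean_Algorithm.gcd"
definition lcm_fract :: "'a fract \<Rightarrow> 'a fract \<Rightarrow> 'a fract" where
  "lcm_fract = Euclidean_Algorithm.lcm"
definition Gcd_fract :: "'a fract set \<Rightarrow> 'a fract" where
 "Gcd_fract = Euclidean_Algorithm.Gcd"
definition Lcm_fract :: "'a fract set \<Rightarrow> 'a fract" where
 "Lcm_fract = Euclidean_Algorithm.Lcm"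
instance by standard (simp_all add: gcd_fract_def lcm_fract_def Gcd_fract_def Lcm_fract_def)
end

instance fract :: (idom) field_gcd ..


lemma map_poly_mult_hom:
  fixes f :: "'a::comm_ring_1 \<Rightarrow> 'b::comm_ring_1"
  assumes f0: "f 0 = 0" and fadd: "\<And>x y. f (x+y) = f x + f y" and fmult: "\<And>x y. f (x*y) = f x * f y"
  shows "map_poly f (p*q) = map_poly f p * map_poly f q"
proof -
  have madd: "map_poly f (a+b) = map_poly f a + map_poly f b" for a b
    by (intro poly_eqI) (simp add: coeff_map_poly f0 fadd)
  have msm: "map_poly f (smult c a) = smult (f c) (map_poly f a)" for c a
    by (intro poly_eqI) (simp add: coeff_map_poly f0 fmult)
  show ?thesis
  proof (induction p)
    case 0 then show ?case by (simp add: f0)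
  next
    case (pCons c p)
    show ?case
      by (simp add: madd msm map_poly_pCons f0 pCons.IH)
  qed
qed

lemma of_nat_fract: "(of_nat n :: 'a::idom fract) = to_fract (of_nat n)"
  by (induction n) simp_all

lemma of_nat_polyfract_nz:
  "n > 0 \<Longrightarrow> (of_nat n :: 'a::field_char_0 poly fract) \<noteq> 0"
  by (simp add: of_nat_fract of_nat_poly)

lemma sqf_coprime:
  fixes p :: "'a::field_char_0 poly fract poly"
  assumes "squarefree p"
  shows "coprime p (pderiv p)"
proof (rule coprimeI)
  fix c assume cp: "c dvd p" and cd: "c dvd pderiv p"
  have p0: "p \<noteq> 0" using assms by auto
  show "is_unit c"
  proof (rule ccontr)
    assume nu: "\<not> is_unit c"
    have c0: "c \<noteq> 0" using cp p0 by auto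
    obtain r where rc: "r dvd c" and pr: "prime r" using prime_divisor_exists[OF c0 nu] by blast
    have rp: "r dvd p" using rc cp by (rule dvd_trans)
    have rd: "r dvd pderiv p" using rc cd by (rule dvd_trans)
    obtain s where ps: "p = r * s" using rp by (auto elim: dvdE)
    have "pderiv p = pderiv r * s + r * pderiv s" unfolding ps by (simp add: pderiv_mult)
    hence "r dvd pderiv r * s" using rd by (metis dvd_add_times_triv_right_iff mult.commute)
    hence "r dvd pderiv r \<or> r dvd s" using pr by (simp add: prime_dvd_mult_iff)
    moreover have "\<not> r dvd s"
    proof
      assume "r dvd s"
      hence "r^2 dvd p" unfolding ps by (simp add: power2_eq_square mult_dvd_mono)
      hence "is_unit r" using assms by (rule squarefreeD[rotated])
      thus False using pr by (simp add: prime_def prime_elem_def)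
    qed
    moreover have "\<not> r dvd pderiv r"
    proof
      assume dv: "r dvd pderiv r"
      have r0: "r \<noteq> 0" using pr by auto
      have "degree r > 0"
        using pr r0 is_unit_iff_degree[OF r0] by (auto simp: prime_def prime_elem_def)
      then obtain m where dm: "degree r = Suc m" by (cases "degree r") auto
      have "coeff (pderiv r) m = of_nat (Suc m) * lead_coeff r"
        by (simp add: coeff_pderiv dm)
      also have "\<dots> \<noteq> 0" using r0 of_nat_polyfract_nz[of "Suc m", where 'a='a] by simp
      finally have pd0: "pderiv r \<noteq> 0" by auto
      have "degree (pderiv r) \<le> m"
        by (rule degree_le) (simp add: coeff_pderiv dm coeff_eq_0)
      moreover have "degree r \<le> degree (pderiv r)" using dvd_imp_degree_le[OF dv pd0] .
      ultimately show False using dm by simp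
    qed
    ultimately show False by blast
  qed
qed

lemma clear_denom:
  fixes w :: "'a::idom fract poly"
  shows "\<exists>c w'. c \<noteq> 0 \<and> smult (to_fract c) w = fract_poly w'"
proof (induction w)
  case 0
  show ?case by (rule exI[of _ 1], rule exI[of _ 0]) simp
next
  case (pCons c w)
  obtain e W where e: "e \<noteq> 0" "smult (to_fract e) w = fract_poly W" using pCons.IH by blast
  obtain a b where ab: "c = Fract a b" "b \<noteq> 0" by (cases c) auto
  have c: "c = to_fract a / to_fract b" using ab by (simp add: Fract_conv_to_fract)
  have 1: "smult (to_fract (b*e)) w = fract_poly (smult b W)"
    using e(2) by (simp add: smult_smult[symmetric])
  have 2: "to_fract (b*e) * c = to_fract (a*e)" using ab(2) by (simp add: c)
  have "smult (to_fract (b*e)) (pCons c w) = fract_poly (pCons (a*e) (smult b W))"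
    by (simp only: smult_pCons 1 2 map_poly_pCons to_fract_0)
  thus ?case using ab(2) e(1) by (metis mult_eq_0_iff)
qed

lemma fract_pderiv: "fract_poly (pderiv p) = pderiv (fract_poly (p :: 'a::idom poly))"
  by (intro poly_eqI) (simp add: coeff_pderiv coeff_map_poly of_nat_fract)

lemma ev_Py_nonzero:
  fixes P :: "'a::field_char_0 poly poly"
  assumes sf: "squarefree_over_Cx P" and sol: "ev a g P = 0"
  shows "ev a g (pderiv P) \<noteq> 0"
proof -
  have "coprime (fract_poly P) (pderiv (fract_poly P))"
    using sf by (intro sqf_coprime) (simp add: squarefree_over_Cx_def)
  hence "gcd (fract_poly P) (pderiv (fract_poly P)) = 1" by (simp add: coprime_iff_gcd_eq_1)
  then obtain u v where uv: "u * fract_poly P + v * pderiv (fract_poly P) = 1"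
    using bezout_coefficients_fst_snd by metis
  obtain cu U where cu: "cu \<noteq> 0" "smult (to_fract cu) u = fract_poly U" using clear_denom by blast
  obtain cv V where cv: "cv \<noteq> 0" "smult (to_fract cv) v = fract_poly V" using clear_denom by blast
  have "fract_poly [:cu*cv:] = smult (to_fract (cu*cv)) 1" by (simp add: map_poly_pCons)
  also have "\<dots> = smult (to_fract (cu*cv)) (u * fract_poly P + v * pderiv (fract_poly P))"
    by (simp add: uv)
  also have "\<dots> = smult (to_fract cv) (smult (to_fract cu) u) * fract_poly P
       + smult (to_fract cu) (smult (to_fract cv) v) * pderiv (fract_poly P)"
    by (simp add: smult_add_right mult.commute)
  also have "\<dots> = fract_poly (smult cv U * P + smult cu V * pderiv P)"
    by (simp add: cu cv fract_pderiv)
  finally have id: "[:cu*cv:] = smult cv U * P + smult cu V * pderiv P"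
    by (simp only: fract_poly_eq_iff)
  have "poly_at a (cu*cv) = ev a g (smult cu V) * ev a g (pderiv P)"
    using arg_cong[OF id, of "ev a g"] sol by simp
  moreover have "poly_at a (cu*cv) \<noteq> 0" using cu cv by simp
  ultimately show ?thesis by auto
qed


lemma pc_mult: fixes p q :: "'a::field poly" shows "poly (map_poly fps_const (p*q)) g = poly (map_poly fps_const p) g * poly (map_poly fps_const q) g"
proof -
  have "map_poly fps_const (p*q) = map_poly fps_const p * map_poly fps_const q"
    by (rule map_poly_mult_hom) (simp_all add: fps_const_add fps_const_mult)
  thus ?thesis by simp
qed

lemma pc_nth0: "(poly (map_poly fps_const q) g) $ 0 = poly q (g $ 0)"
  by (induction q) (simp_all add: map_poly_pCons)

lemma pc_zero_imp_const:
  fixes l :: "'a::field poly"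
  assumes l0: "l \<noteq> 0" and z: "poly (map_poly fps_const l) g = 0"
  shows "g = fps_const (g$0)"
proof -
  obtain q where lq: "l = [:-(g$0), 1:] ^ order (g$0) l * q" and nd: "\<not> [:-(g$0), 1:] dvd q"
    using order_decomp[OF l0] by blast
  have q0: "poly q (g$0) \<noteq> 0" using nd by (simp add: poly_eq_0_iff_dvd)
  have pp: "poly (map_poly fps_const (p ^ n)) g = poly (map_poly fps_const p) g ^ n" for p :: "'a poly" and n
    by (induction n) (simp_all add: pc_mult)
  have lin: "poly (map_poly fps_const [:-(g$0), 1:]) g = g - fps_const (g$0)"
    by (simp add: map_poly_pCons fps_const_neg)
  have "0 = (g - fps_const (g$0)) ^ order (g$0) l * poly (map_poly fps_const q) g"
    using z by (subst (asm) lq) (simp add: pc_mult pp lin)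
  moreover have "poly (map_poly fps_const q) g \<noteq> 0"
  proof
    assume "poly (map_poly fps_const q) g = 0"
    hence "(poly (map_poly fps_const q) g) $ 0 = 0" by simp
    thus False using q0 by (simp add: pc_nth0)
  qed
  ultimately have "(g - fps_const (g$0)) ^ order (g$0) l = 0" by simp
  thus ?thesis by simp
qed

lemma poly_at_smult[simp]: "poly_at a (smult c p) = fps_const c * poly_at a p"
  by (simp add: poly_at_def pcompose_smult fps_of_poly_smult)

lemma ev_fps_const: "ev a (fps_const c) Q = poly_at a (poly Q [:c:])"
  by (induction Q) (simp_all add: ev_pCons)

lemma const_root_contra:
  fixes P :: "'a::field poly poly"
  assumes nd: "no_y_divisor P" and z: "ev a (fps_const c) P = 0"
  shows False
proof -
  have "poly P [:c:] = 0" using z by (simp add: ev_fps_const)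
  then obtain Q where PQ: "P = [:-[:c:], 1:] * Q" by (auto simp: poly_eq_0_iff_dvd elim: dvdE)
  define \<phi> where "\<phi> = (map_poly to_ac :: 'a poly \<Rightarrow> 'a alg_closure poly)"
  have phi0: "\<phi> 0 = 0" by (simp add: \<phi>_def)
  have phiadd: "\<phi> (x+y) = \<phi> x + \<phi> y" for x y
    unfolding \<phi>_def by (intro poly_eqI) (simp add: coeff_map_poly)
  have phimult: "\<phi> (x*y) = \<phi> x * \<phi> y" for x y
    unfolding \<phi>_def by (rule map_poly_mult_hom) simp_all
  have "map_poly \<phi> P = map_poly \<phi> [:-[:c:], 1:] * map_poly \<phi> Q"
    unfolding PQ by (rule map_poly_mult_hom[OF phi0 phiadd phimult])
  moreover have "map_poly \<phi> [:-[:c:], 1:] = map_poly (\<lambda>c. [:c:]) [:- to_ac c, 1:]"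
    by (simp add: \<phi>_def map_poly_pCons)
  ultimately have "map_poly (\<lambda>c. [:c:]) [:- to_ac c, 1:] dvd map_poly (map_poly to_ac) P"
    by (simp add: \<phi>_def)
  moreover have "degree [:- to_ac c, 1:] > 0" by simp
  ultimately show False using nd unfolding no_y_divisor_def by blast
qed


definition dx :: "'a::idom poly poly \<Rightarrow> 'a poly poly" where "dx Q = map_poly pderiv Q"

definition EE :: "'a::field \<Rightarrow> 'a fps \<Rightarrow> 'a fps \<Rightarrow> nat \<Rightarrow> (nat \<Rightarrow> 'a poly poly) \<Rightarrow> 'a fps" where
  "EE x0 g f n A = (\<Sum>a<n. ev x0 g (A a) * Fk f g a)"

definition lr :: "'a::zero poly poly \<Rightarrow> 'a poly poly" where "lr L = cy (coeff L (degree L))"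

definition Cstep :: "'a::idom poly poly \<Rightarrow> 'a poly poly \<Rightarrow> (nat \<Rightarrow> 'a poly poly) \<Rightarrow> nat \<Rightarrow> 'a poly poly" where
  "Cstep P L A a = lr L * (pderiv P * dx (A a) - dx P * pderiv (A a) - dx P * (if a = 0 then 0 else A (a-1)))
       + dx P * A (degree L - 1) * cy (coeff L a)"

lemma ev_dx_deriv: "fps_deriv (ev x0 g Q) = ev x0 g (dx Q) + ev x0 g (pderiv Q) * fps_deriv g"
  unfolding dx_def by (rule ev_deriv)

lemma shift_sum:
  fixes A F :: "nat \<Rightarrow> 'b::comm_ring_1"
  assumes "n \<ge> 1"
  shows "(\<Sum>a<n. A a * F (Suc a)) = (\<Sum>a<n. (if a = 0 then 0 else A (a-1)) * F a) + A (n-1) * F n"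
proof -
  obtain m where n: "n = Suc m" using assms by (cases n) auto
  have l: "(\<Sum>a<Suc m. A a * F (Suc a)) = (\<Sum>a<m. A a * F (Suc a)) + A m * F (Suc m)"
    by (simp only: sum.lessThan_Suc)
  have r: "(\<Sum>a<Suc m. (if a = 0 then 0 else A (a-1)) * F a) = (\<Sum>a<m. A a * F (Suc a))"
    by (subst sum.lessThan_Suc_shift) simp
  show ?thesis unfolding n l r by simp
qed

lemma gderiv_rel:
  assumes "ev x0 g P = 0"
  shows "ev x0 g (pderiv P) * fps_deriv g = - ev x0 g (dx P)"
proof -
  have "fps_deriv (ev x0 g P) = 0" using assms by simp
  thus ?thesis unfolding ev_dx_deriv by (simp add: eq_neg_iff_add_eq_0 add.commute)
qed

lemma key_C:
  fixes g f :: "'a::field fps"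
  assumes sol: "ev x0 g P = 0" and Lrel: "(\<Sum>k\<le>degree L. ev x0 g (cy (coeff L k)) * Fk f g k) = 0"
    and rL: "degree L \<ge> 1"
  shows "ev x0 g (pderiv P) * ev x0 g (lr L) * fps_deriv (EE x0 g f (degree L) A)
       = EE x0 g f (degree L) (Cstep P L A)"
proof -
  define n where "n = degree L"
  define p where "p = ev x0 g (pderiv P)"
  define q where "q = ev x0 g (dx P)"
  define lam where "lam = ev x0 g (lr L)"
  define e where "e = (\<lambda>Q. ev x0 g Q)"
  define F where "F = Fk f g"
  have n1: "n \<ge> 1" using rL n_def by simp
  have pg: "p * fps_deriv g = - q" using gderiv_rel[OF sol] by (simp add: p_def q_def)
  have lamF: "lam * F n = - (\<Sum>k<n. e (cy (coeff L k)) * F k)"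
  proof -
    have "(\<Sum>k<Suc n. e (cy (coeff L k)) * F k) = 0" using Lrel
      by (simp add: lessThan_Suc_atMost n_def e_def F_def)
    thus ?thesis by (simp add: lam_def lr_def n_def e_def eq_neg_iff_add_eq_0 add.commute)
  qed
  have d1: "p * fps_deriv (EE x0 g f n A) =
     (\<Sum>a<n. (p * e (dx (A a)) - q * e (pderiv (A a))) * F a) - q * (\<Sum>a<n. e (A a) * F (Suc a))"
  proof -
    have "p * fps_deriv (EE x0 g f n A) = (\<Sum>a<n. p * fps_deriv (e (A a) * F a))"
      by (simp add: EE_def sum_distrib_left e_def F_def fps_deriv_sum)
    also have "\<dots> = (\<Sum>a<n. (p * e (dx (A a)) - q * e (pderiv (A a))) * F a - q * (e (A a) * F (Suc a)))"
    proof (rule sum.cong[OF refl])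
      fix a
      have "p * fps_deriv (e (A a) * F a) = p * e (dx (A a)) * F a + e (pderiv (A a)) * F a * (p * fps_deriv g)
          + e (A a) * F (Suc a) * (p * fps_deriv g)"
        by (simp add: e_def F_def ev_dx_deriv Fk_deriv algebra_simps)
      also have "\<dots> = (p * e (dx (A a)) - q * e (pderiv (A a))) * F a - q * (e (A a) * F (Suc a))"
        unfolding pg by (simp add: algebra_simps)
      finally show "p * fps_deriv (e (A a) * F a) = \<dots>" .
    qed
    also have "\<dots> = (\<Sum>a<n. (p * e (dx (A a)) - q * e (pderiv (A a))) * F a) - q * (\<Sum>a<n. e (A a) * F (Suc a))"
      by (simp add: sum_subtractf sum_distrib_left)
    finally show ?thesis .
  qed
  have sh: "(\<Sum>a<n. e (A a) * F (Suc a)) = (\<Sum>a<n. e (if a = 0 then 0 else A (a-1)) * F a) + e (A (n-1)) * F n"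
  proof -
    have "(\<Sum>a<n. e (if a = 0 then 0 else A (a-1)) * F a) = (\<Sum>a<n. (if a = 0 then 0 else e (A (a-1))) * F a)"
      by (rule sum.cong) (auto simp: e_def)
    thus ?thesis using shift_sum[OF n1, of "\<lambda>a. e (A a)" F] by simp
  qed
  have "p * lam * fps_deriv (EE x0 g f n A) = lam * (p * fps_deriv (EE x0 g f n A))" by (simp add: algebra_simps)
  also have "\<dots> = lam * (\<Sum>a<n. (p * e (dx (A a)) - q * e (pderiv (A a))) * F a)
       - q * lam * (\<Sum>a<n. e (if a = 0 then 0 else A (a-1)) * F a) - q * e (A (n-1)) * (lam * F n)"
    unfolding d1 sh by (simp add: algebra_simps)
  also have "\<dots> = (\<Sum>a<n. e (Cstep P L A a) * F a)"
    unfolding lamF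
    by (simp add: Cstep_def e_def p_def q_def lam_def sum_distrib_left sum_distrib_right
        sum_subtractf[symmetric] sum.distrib[symmetric] algebra_simps n_def)
  finally show ?thesis by (simp add: EE_def p_def lam_def n_def e_def F_def)
qed


definition SS :: "'a::idom poly poly \<Rightarrow> 'a poly poly" where
  "SS P = pderiv P * dx (pderiv P) - dx P * pderiv (pderiv P)"
definition Tl :: "'a::idom poly poly \<Rightarrow> 'a poly poly \<Rightarrow> 'a poly poly" where
  "Tl P L = pderiv P * dx (lr L) - dx P * pderiv (lr L)"
definition Bstep :: "'a::idom poly poly \<Rightarrow> 'a poly poly \<Rightarrow> nat \<Rightarrow> nat \<Rightarrow> (nat \<Rightarrow> 'a poly poly) \<Rightarrow> nat \<Rightarrow> 'a poly poly" where
  "Bstep P L m n A a = pderiv P * Cstep P L A a - (of_nat m * lr L * SS P + of_nat n * pderiv P * Tl P L) * A a"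
definition B1 :: "'a::idom poly poly \<Rightarrow> 'a poly poly \<Rightarrow> nat \<Rightarrow> nat \<Rightarrow> (nat \<Rightarrow> 'a poly poly) \<Rightarrow> nat \<Rightarrow> 'a poly poly" where
  "B1 P L m n A a = Cstep P L A a - (of_nat m * lr L * dx (pderiv P) + of_nat n * Tl P L) * A a"

lemma xderiv_power: "(x::'a::field fps) * fps_deriv (x^m) = of_nat m * x^m * fps_deriv x"
proof (cases m)
  case 0 then show ?thesis by simp
next
  case (Suc k)
  have 1: "fps_deriv (x^m) = of_nat m * fps_deriv x * x^k" using fps_deriv_power'[of x m] Suc by simp
  have 2: "x^m = x * x^k" using Suc by simp
  show ?thesis unfolding 1 by (simp add: 2 algebra_simps)
qed

lemma ev_linear_deriv:
  assumes "ev x0 g P = 0"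
  shows "ev x0 g (pderiv P) * fps_deriv (ev x0 g Q) = ev x0 g (pderiv P * dx Q - dx P * pderiv Q)"
proof -
  have "ev x0 g (pderiv P) * fps_deriv (ev x0 g Q) = ev x0 g (pderiv P) * ev x0 g (dx Q)
      + ev x0 g (pderiv Q) * (ev x0 g (pderiv P) * fps_deriv g)"
    by (simp add: ev_dx_deriv algebra_simps)
  also have "\<dots> = ev x0 g (pderiv P * dx Q - dx P * pderiv Q)"
    unfolding gderiv_rel[OF assms] by (simp add: algebra_simps)
  finally show ?thesis .
qed

lemma denom_deriv:
  fixes P L :: "'a::field poly poly"
  assumes sol: "ev x0 g P = 0"
  defines "p \<equiv> ev x0 g (pderiv P)" and "lam \<equiv> ev x0 g (lr L)"
  shows "p^2 * lam * fps_deriv (p^m * lam^n)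
       = p^m * lam^n * (of_nat m * lam * ev x0 g (SS P) + of_nat n * p * ev x0 g (Tl P L))"
proof -
  have 1: "p * fps_deriv p = ev x0 g (SS P)"
    unfolding p_def SS_def by (rule ev_linear_deriv[OF sol])
  have 2: "p * fps_deriv lam = ev x0 g (Tl P L)"
    unfolding p_def lam_def Tl_def by (rule ev_linear_deriv[OF sol])
  have "p^2 * lam * fps_deriv (p^m * lam^n) = p * lam * lam^n * (p * fps_deriv (p^m))
       + p^2 * p^m * (lam * fps_deriv (lam^n))"
    by (simp add: fps_deriv_mult power2_eq_square algebra_simps)
  also have "\<dots> = p * lam * lam^n * (of_nat m * p^m * fps_deriv p)
       + p^2 * p^m * (of_nat n * lam^n * fps_deriv lam)"
    by (simp only: xderiv_power)
  also have "\<dots> = p^m * lam^n * (of_nat m * lam * (p * fps_deriv p) + of_nat n * p * (p * fps_deriv lam))"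
    by (simp add: power2_eq_square algebra_simps)
  finally show ?thesis unfolding 1 2 .
qed

lemma key_K:
  fixes g f T :: "'a::field fps"
  assumes sol: "ev x0 g P = 0" and Lrel: "(\<Sum>k\<le>degree L. ev x0 g (cy (coeff L k)) * Fk f g k) = 0"
    and rL: "degree L \<ge> 1"
    and rep: "T * ev x0 g (pderiv P) ^ m * ev x0 g (lr L) ^ n = EE x0 g f (degree L) A"
  shows "fps_deriv T * ev x0 g (pderiv P) ^ (m+2) * ev x0 g (lr L) ^ (n+1)
       = EE x0 g f (degree L) (Bstep P L m n A)"
proof -
  define p where "p = ev x0 g (pderiv P)"
  define lam where "lam = ev x0 g (lr L)"
  define E where "E = EE x0 g f (degree L)"
  define st where "st = of_nat m * lam * ev x0 g (SS P) + of_nat n * p * ev x0 g (Tl P L)"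
  have C: "p * lam * fps_deriv (E A) = E (Cstep P L A)"
    unfolding p_def lam_def E_def by (rule key_C[OF sol Lrel rL])
  have Dd: "p^2 * lam * fps_deriv (p^m * lam^n) = p^m * lam^n * st"
    unfolding p_def lam_def st_def by (rule denom_deriv[OF sol])
  have rep': "T * (p^m * lam^n) = E A" using rep by (simp add: p_def lam_def E_def mult.assoc)
  have "fps_deriv (T * (p^m * lam^n)) = fps_deriv (E A)" using rep' by simp
  moreover have "fps_deriv (T * (p^m * lam^n)) = fps_deriv T * (p^m * lam^n) + T * fps_deriv (p^m * lam^n)"
    by (simp add: fps_deriv_mult algebra_simps)
  ultimately have "fps_deriv T * (p^m * lam^n) + T * fps_deriv (p^m * lam^n) = fps_deriv (E A)"
    by simp
  hence "fps_deriv T * (p^m * lam^n) = fps_deriv (E A) - T * fps_deriv (p^m * lam^n)"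
    by (simp add: eq_diff_eq)
  hence "p^2 * lam * (fps_deriv T * (p^m * lam^n)) = p^2 * lam * (fps_deriv (E A) - T * fps_deriv (p^m * lam^n))"
    by simp
  also have "\<dots> = p * (p * lam * fps_deriv (E A)) - T * (p^2 * lam * fps_deriv (p^m * lam^n))"
    by (simp add: algebra_simps power2_eq_square)
  also have "\<dots> = p * E (Cstep P L A) - E A * st"
    by (simp only: C Dd) (simp add: rep'[symmetric] algebra_simps)
  also have "\<dots> = E (Bstep P L m n A)"
  proof -
    have "E (Bstep P L m n A) = (\<Sum>a<degree L. p * (ev x0 g (Cstep P L A a) * Fk f g a) - st * (ev x0 g (A a) * Fk f g a))"
      unfolding E_def EE_def by (rule sum.cong) (simp_all add: Bstep_def st_def p_def lam_def algebra_simps)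
    also have "\<dots> = p * E (Cstep P L A) - E A * st"
      by (simp add: E_def EE_def sum_subtractf sum_distrib_left mult.commute)
    finally show ?thesis by simp
  qed
  finally show ?thesis by (simp add: p_def lam_def E_def power_add power2_eq_square algebra_simps)
qed

lemma key_K1:
  fixes g f T :: "'a::field_char_0 fps"
  assumes sol: "ev x0 g P = 0" and Lrel: "(\<Sum>k\<le>degree L. ev x0 g (cy (coeff L k)) * Fk f g k) = 0"
    and rL: "degree L \<ge> 1" and Pyy: "pderiv (pderiv P) = 0" and p0: "ev x0 g (pderiv P) \<noteq> 0"
    and rep: "T * ev x0 g (pderiv P) ^ m * ev x0 g (lr L) ^ n = EE x0 g f (degree L) A"
  shows "fps_deriv T * ev x0 g (pderiv P) ^ (m+1) * ev x0 g (lr L) ^ (n+1)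
       = EE x0 g f (degree L) (B1 P L m n A)"
proof -
  define p where "p = ev x0 g (pderiv P)"
  have "Bstep P L m n A a = pderiv P * B1 P L m n A a" for a
    by (simp add: Bstep_def B1_def SS_def Pyy algebra_simps)
  hence "EE x0 g f (degree L) (Bstep P L m n A) = p * EE x0 g f (degree L) (B1 P L m n A)"
    by (simp add: EE_def p_def sum_distrib_left algebra_simps)
  hence "p * (fps_deriv T * p ^ (m+1) * ev x0 g (lr L) ^ (n+1)) = p * EE x0 g f (degree L) (B1 P L m n A)"
    using key_K[OF sol Lrel rL rep] by (simp add: p_def algebra_simps)
  thus ?thesis using p0 by (simp add: p_def)
qed

definition stp :: "'a::idom poly poly \<Rightarrow> 'a poly poly \<Rightarrow> nat \<Rightarrow> nat \<Rightarrow> (nat \<Rightarrow> 'a poly poly) \<Rightarrow> nat \<Rightarrow> 'a poly poly" where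
  "stp P L e i A = (if e = 2 then Bstep P L (2*i) i A else B1 P L i i A)"

fun Aseq :: "'a::idom poly poly \<Rightarrow> 'a poly poly \<Rightarrow> nat \<Rightarrow> nat \<Rightarrow> nat \<Rightarrow> 'a poly poly" where
  "Aseq P L e 0 = (\<lambda>a. if a = 0 then 1 else 0)"
| "Aseq P L e (Suc i) = stp P L e i (Aseq P L e i)"

lemma Aseq_rep:
  fixes g f :: "'a::field_char_0 fps"
  assumes sol: "ev x0 g P = 0" and Lrel: "(\<Sum>k\<le>degree L. ev x0 g (cy (coeff L k)) * Fk f g k) = 0"
    and rL: "degree L \<ge> 1" and p0: "ev x0 g (pderiv P) \<noteq> 0"
    and e: "e = 1 \<and> pderiv (pderiv P) = 0 \<or> e = 2"
  shows "(fps_deriv ^^ i) (comp_at f g) * ev x0 g (pderiv P) ^ (e*i) * ev x0 g (lr L) ^ i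
       = EE x0 g f (degree L) (Aseq P L e i)"
proof (induction i)
  case 0
  have "EE x0 g f (degree L) (Aseq P L e 0) = (\<Sum>a<degree L. (if a = 0 then Fk f g a else 0))"
    unfolding EE_def by (rule sum.cong) auto
  also have "\<dots> = Fk f g 0" using rL by (simp add: sum.delta)
  finally show ?case by (simp add: Fk_0)
next
  case (Suc i)
  show ?case
  proof (cases "e = 2")
    case True
    have "fps_deriv ((fps_deriv ^^ i) (comp_at f g)) * ev x0 g (pderiv P) ^ (2*i+2) * ev x0 g (lr L) ^ (i+1)
       = EE x0 g f (degree L) (Bstep P L (2*i) i (Aseq P L e i))"
      using key_K[OF sol Lrel rL Suc.IH[unfolded True]] True by simp
    thus ?thesis using True by (simp add: stp_def)
  next
    case False
    hence e1: "e = 1" and Pyy: "pderiv (pderiv P) = 0" using e by auto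
    have "fps_deriv ((fps_deriv ^^ i) (comp_at f g)) * ev x0 g (pderiv P) ^ (i+1) * ev x0 g (lr L) ^ (i+1)
       = EE x0 g f (degree L) (B1 P L i i (Aseq P L e i))"
    proof -
      have IH': "(fps_deriv ^^ i) (comp_at f g) * ev x0 g (pderiv P) ^ i * ev x0 g (lr L) ^ i
         = EE x0 g f (degree L) (Aseq P L e i)" using Suc.IH e1 by simp
      show ?thesis using key_K1[OF sol Lrel rL Pyy p0 IH'] by simp
    qed
    thus ?thesis using e1 by (simp add: stp_def)
  qed
qed


definition bideg :: "'a::zero poly poly \<Rightarrow> nat \<Rightarrow> nat \<Rightarrow> bool" where
  "bideg Q xx yy \<longleftrightarrow> degree Q \<le> yy \<and> (\<forall>k. degree (coeff Q k) \<le> xx)"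

lemma bideg_mono: "bideg Q xx yy \<Longrightarrow> xx \<le> xx' \<Longrightarrow> yy \<le> yy' \<Longrightarrow> bideg Q xx' yy'"
  unfolding bideg_def using order_trans by blast

lemma bideg_0[simp]: "bideg 0 xx yy" by (simp add: bideg_def)
lemma bideg_1[simp]: "bideg 1 xx yy" by (simp add: bideg_def coeff_1)
lemma bideg_of_nat[simp]: "bideg (of_nat n :: 'a::idom poly poly) xx yy"
  by (simp add: bideg_def of_nat_poly coeff_pCons split: nat.split)

lemma bideg_add: "bideg p xx yy \<Longrightarrow> bideg q xx yy \<Longrightarrow> bideg (p + q) xx yy"
  by (simp add: bideg_def degree_add_le)
lemma bideg_diff: "bideg p xx yy \<Longrightarrow> bideg q xx yy \<Longrightarrow> bideg (p - q :: 'a::ab_group_add poly poly) xx yy"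
  by (simp add: bideg_def degree_diff_le)

lemma bideg_mult:
  fixes p q :: "'a::comm_semiring_1 poly poly"
  assumes "bideg p xa ya" "bideg q xb yb"
  shows "bideg (p * q) (xa + xb) (ya + yb)"
  unfolding bideg_def
proof
  show "degree (p * q) \<le> ya + yb"
    using assms degree_mult_le[of p q] unfolding bideg_def by linarith
  show "\<forall>k. degree (coeff (p * q) k) \<le> xa + xb"
  proof
    fix k
    show "degree (coeff (p * q) k) \<le> xa + xb"
      unfolding coeff_mult
    proof (rule degree_sum_le)
      fix i
      show "degree (coeff p i * coeff q (k - i)) \<le> xa + xb"
        using assms degree_mult_le[of "coeff p i" "coeff q (k-i)"] unfolding bideg_def
        by (meson add_le_mono order_trans)
    qed simp
  qed
qed

lemma bideg_mult': "bideg p xa ya \<Longrightarrow> bideg q xb yb \<Longrightarrow> xa + xb \<le> xx \<Longrightarrow> ya + yb \<le> yy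
   \<Longrightarrow> bideg (p * q :: 'a::idom poly poly) xx yy"
  using bideg_mult bideg_mono by blast

lemma bideg_sum: "(\<And>i. i \<in> S \<Longrightarrow> bideg (f i) xx yy) \<Longrightarrow> bideg (sum f S) xx yy"
  by (induction S rule: infinite_finite_induct) (auto intro: bideg_add)

lemma bideg_power: "bideg p xx yy \<Longrightarrow> bideg (p ^ n :: 'a::comm_semiring_1 poly poly) (n*xx) (n*yy)"
  by (induction n) (auto intro: bideg_mult)

lemma bideg_pderiv:
  fixes p :: "'a::idom poly poly"
  shows "bideg p xx yy \<Longrightarrow> bideg (pderiv p) xx (yy - 1)"
  unfolding bideg_def
proof safe
  assume d: "degree p \<le> yy" and c: "\<forall>k. degree (coeff p k) \<le> xx"
  show "degree (pderiv p) \<le> yy - 1"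
    by (rule degree_le) (use d in \<open>auto simp: coeff_pderiv coeff_eq_0\<close>)
  fix k
  show "degree (coeff (pderiv p) k) \<le> xx"
    unfolding coeff_pderiv using c degree_mult_le[of "of_nat (Suc k)" "coeff p (Suc k)"]
    by (simp add: of_nat_poly)
qed

lemma degree_pderiv_le': "degree (pderiv (p :: 'a::idom poly)) \<le> degree p"
  by (rule degree_le) (auto simp: coeff_pderiv coeff_eq_0)

lemma bideg_dx:
  fixes p :: "'a::idom poly poly"
  shows "bideg p xx yy \<Longrightarrow> bideg (dx p) xx yy"
  unfolding bideg_def dx_def
  by (auto simp: coeff_map_poly intro: order_trans[OF degree_pderiv_le'] order_trans[OF map_poly_degree_leq])

lemma bideg_cy:
  fixes l :: "'a::comm_semiring_1 poly"
  shows "degree l \<le> yy \<Longrightarrow> bideg (cy l) 0 yy"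
  by (simp add: bideg_def cy_def degree_map_poly coeff_map_poly)

lemma bideg_const:
  "degree c \<le> xx \<Longrightarrow> bideg [:c:] xx 0"
  by (simp add: bideg_def coeff_pCons split: nat.split)

lemma bideg_P:
  fixes P :: "'a::zero poly poly"
  shows "bideg P (deg_x P) (deg_y P)"
  unfolding bideg_def deg_y_def deg_x_def
proof safe
  fix k
  show "degree (coeff P k) \<le> Max {degree (coeff P j) |j. j \<le> degree P}"
  proof (cases "k \<le> degree P")
    case True
    have fin: "finite {degree (coeff P j) |j. j \<le> degree P}" by simp
    show ?thesis using True by (intro Max_ge[OF fin]) auto
  next
    case False
    then show ?thesis by (simp add: coeff_eq_0)
  qed
qed


locale degsetup =
  fixes P L :: "'a::field poly poly" and dP rP dL :: nat
  assumes hP: "bideg P dP rP" and rP1: "rP \<ge> 1" and hL: "\<forall>k. degree (coeff L k) \<le> dL"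
begin

lemma hPy: "bideg (pderiv P) dP (rP - 1)" using bideg_pderiv[OF hP] .
lemma hPx: "bideg (dx P) dP rP" using bideg_dx[OF hP] .
lemma hPxy: "bideg (dx (pderiv P)) dP (rP - 1)" using bideg_dx[OF hPy] .
lemma hPyy: "bideg (pderiv (pderiv P)) dP (rP - 1)"
  using bideg_mono[OF bideg_pderiv[OF hPy]] by simp
lemma hl: "bideg (cy (coeff L k)) 0 dL" using bideg_cy hL by blast
lemma hlr: "bideg (lr L) 0 dL" unfolding lr_def by (rule hl)
lemma hlrx: "bideg (dx (lr L)) 0 dL" using bideg_dx[OF hlr] .
lemma hlry: "bideg (pderiv (lr L)) 0 dL" using bideg_mono[OF bideg_pderiv[OF hlr]] by simp

lemma Cstep_bideg:
  assumes hA: "\<And>a. bideg (A a) xx yy"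
  shows "bideg (Cstep P L A a) (xx + dP) (yy + rP + dL)"
proof -
  have hA': "bideg (if a = 0 then 0 else A (a-1)) xx yy" using hA by simp
  have 1: "bideg (pderiv P * dx (A a)) (xx + dP) (yy + rP)"
    by (rule bideg_mult'[OF hPy bideg_dx[OF hA]]) auto
  have 2: "bideg (dx P * pderiv (A a)) (xx + dP) (yy + rP)"
    by (rule bideg_mult'[OF hPx bideg_pderiv[OF hA]]) auto
  have 3: "bideg (dx P * (if a = 0 then 0 else A (a-1))) (xx + dP) (yy + rP)"
    by (rule bideg_mult'[OF hPx hA']) auto
  have 4: "bideg (lr L * (pderiv P * dx (A a) - dx P * pderiv (A a) - dx P * (if a = 0 then 0 else A (a-1))))
      (xx + dP) (yy + rP + dL)"
    by (rule bideg_mult'[OF hlr bideg_diff[OF bideg_diff[OF 1 2] 3]]) auto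
  have 5: "bideg (dx P * A (degree L - 1) * cy (coeff L a)) (xx + dP) (yy + rP + dL)"
    by (rule bideg_mult'[OF bideg_mult[OF hPx hA] hl]) auto
  show ?thesis unfolding Cstep_def by (rule bideg_add[OF 4 5])
qed

lemma Bstep_bideg:
  assumes hA: "\<And>a. bideg (A a) xx yy"
  shows "bideg (Bstep P L m n A a) (xx + 2*dP) (yy + (2*rP + dL - 1))"
proof -
  have 1: "bideg (pderiv P * Cstep P L A a) (xx + 2*dP) (yy + (2*rP + dL - 1))"
    by (rule bideg_mult'[OF hPy Cstep_bideg[OF hA]]) (use rP1 in auto)
  have s1: "bideg (pderiv P * dx (pderiv P)) (2*dP) (2*rP - 1)"
    by (rule bideg_mult'[OF hPy hPxy]) (use rP1 in auto)
  have s2: "bideg (dx P * pderiv (pderiv P)) (2*dP) (2*rP - 1)"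
    by (rule bideg_mult'[OF hPx hPyy]) (use rP1 in auto)
  have hS: "bideg (SS P) (2*dP) (2*rP - 1)" unfolding SS_def by (rule bideg_diff[OF s1 s2])
  have t1: "bideg (pderiv P * dx (lr L)) dP (rP + dL)"
    by (rule bideg_mult'[OF hPy hlrx]) auto
  have t2: "bideg (dx P * pderiv (lr L)) dP (rP + dL)"
    by (rule bideg_mult'[OF hPx hlry]) auto
  have hT: "bideg (Tl P L) dP (rP + dL)" unfolding Tl_def by (rule bideg_diff[OF t1 t2])
  have c1: "bideg (of_nat m * lr L * SS P) (2*dP) (2*rP + dL - 1)"
    by (rule bideg_mult'[OF bideg_mult[OF bideg_of_nat[of m 0 0] hlr] hS]) (use rP1 in auto)
  have c2: "bideg (of_nat n * pderiv P * Tl P L) (2*dP) (2*rP + dL - 1)"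
    by (rule bideg_mult'[OF bideg_mult[OF bideg_of_nat[of n 0 0] hPy] hT]) (use rP1 in auto)
  have 2: "bideg ((of_nat m * lr L * SS P + of_nat n * pderiv P * Tl P L) * A a) (xx + 2*dP) (yy + (2*rP + dL - 1))"
    by (rule bideg_mult'[OF bideg_add[OF c1 c2] hA]) auto
  show ?thesis unfolding Bstep_def by (rule bideg_diff[OF 1 2])
qed

lemma B1_bideg:
  assumes hA: "\<And>a. bideg (A a) xx yy" and r1: "rP = 1"
  shows "bideg (B1 P L m n A a) (xx + dP) (yy + (2*rP + dL - 1))"
proof -
  have 1: "bideg (Cstep P L A a) (xx + dP) (yy + (2*rP + dL - 1))"
    using bideg_mono[OF Cstep_bideg[OF hA]] r1 by simp
  have t1: "bideg (pderiv P * dx (lr L)) dP (rP + dL)"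
    by (rule bideg_mult'[OF hPy hlrx]) auto
  have t2: "bideg (dx P * pderiv (lr L)) dP (rP + dL)"
    by (rule bideg_mult'[OF hPx hlry]) auto
  have hT: "bideg (Tl P L) dP (rP + dL)" unfolding Tl_def by (rule bideg_diff[OF t1 t2])
  have c1: "bideg (of_nat m * lr L * dx (pderiv P)) dP (2*rP + dL - 1)"
    by (rule bideg_mult'[OF bideg_mult[OF bideg_of_nat[of m 0 0] hlr] hPxy]) (use r1 in auto)
  have c2: "bideg (of_nat n * Tl P L) dP (2*rP + dL - 1)"
    by (rule bideg_mult'[OF bideg_of_nat[of n 0 0] hT]) (use r1 in auto)
  have 2: "bideg ((of_nat m * lr L * dx (pderiv P) + of_nat n * Tl P L) * A a) (xx + dP) (yy + (2*rP + dL - 1))"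
    by (rule bideg_mult'[OF bideg_add[OF c1 c2] hA]) auto
  show ?thesis unfolding B1_def by (rule bideg_diff[OF 1 2])
qed

lemma Aseq_bideg:
  assumes e: "e = 2 \<or> e = 1 \<and> rP = 1"
  shows "bideg (Aseq P L e i a) (e*dP*i) ((2*rP + dL - 1)*i)"
proof (induction i arbitrary: a)
  case 0 then show ?case by simp
next
  case (Suc i)
  show ?case
  proof (cases "e = 2")
    case True
    have "bideg (Bstep P L (2*i) i (Aseq P L e i) a) (e*dP*i + 2*dP) ((2*rP + dL - 1)*i + (2*rP + dL - 1))"
      by (rule Bstep_bideg) (rule Suc.IH)
    moreover have "e*dP*i + 2*dP = e*dP*Suc i" using True by simp
    moreover have "(2*rP + dL - 1)*i + (2*rP + dL - 1) = (2*rP + dL - 1)*Suc i" by simp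
    ultimately show ?thesis using True by (simp add: stp_def add.commute)
  next
    case False
    hence e1: "e = 1" and r1: "rP = 1" using e by auto
    have "bideg (B1 P L i i (Aseq P L e i) a) (e*dP*i + dP) ((2*rP + dL - 1)*i + (2*rP + dL - 1))"
      by (rule B1_bideg) (rule Suc.IH, rule r1)
    moreover have "e*dP*i + dP = e*dP*Suc i" using e1 by simp
    moreover have "(2*rP + dL - 1)*i + (2*rP + dL - 1) = (2*rP + dL - 1)*Suc i" by simp
    ultimately show ?thesis using e1 by (simp add: stp_def add.commute)
  qed
qed

end


lemma homog_system:
  fixes A :: "'e \<Rightarrow> 'u \<Rightarrow> 'a::field"
  assumes "finite E" "finite U" "card E < card U"
  shows "\<exists>c. (\<exists>u\<in>U. c u \<noteq> 0) \<and> (\<forall>e\<in>E. (\<Sum>u\<in>U. A e u * c u) = 0)"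
  using assms
proof (induction E arbitrary: U A rule: finite_induct)
  case empty
  then obtain u0 where u0: "u0 \<in> U" by (metis card.empty card_gt_0_iff ex_in_conv)
  show ?case by (rule exI[of _ "\<lambda>u. if u = u0 then 1 else 0"]) (use u0 in auto)
next
  case (insert e E)
  show ?case
  proof (cases "\<forall>u\<in>U. A e u = 0")
    case True
    have "card E < card U" using insert by simp
    then obtain c where c: "\<exists>u\<in>U. c u \<noteq> 0" "\<forall>e\<in>E. (\<Sum>u\<in>U. A e u * c u) = 0"
      using insert.IH[OF insert.prems(1)] by blast
    show ?thesis using c True by (intro exI[of _ c]) auto
  next
    case False
    then obtain u0 where u0: "u0 \<in> U" "A e u0 \<noteq> 0" by blast
    define U' where "U' = U - {u0}"
    define A' where "A' = (\<lambda>e' u. A e' u - A e' u0 * A e u / A e u0)"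
    have fU': "finite U'" using insert.prems by (simp add: U'_def)
    have cU': "card E < card U'" using insert.prems insert.hyps u0 by (simp add: U'_def)
    obtain c' where c': "\<exists>u\<in>U'. c' u \<noteq> 0" "\<forall>e'\<in>E. (\<Sum>u\<in>U'. A' e' u * c' u) = 0"
      using insert.IH[OF fU' cU'] by blast
    define s where "s = (\<Sum>v\<in>U'. A e v * c' v)"
    define c where "c = (\<lambda>u. if u = u0 then - s / A e u0 else c' u)"
    have split: "(\<Sum>u\<in>U. B u * c u) = B u0 * (- s / A e u0) + (\<Sum>u\<in>U'. B u * c' u)" for B
    proof -
      have "(\<Sum>u\<in>U. B u * c u) = B u0 * c u0 + (\<Sum>u\<in>U'. B u * c u)"
        unfolding U'_def using insert.prems(1) u0(1) by (rule sum.remove)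
      also have "(\<Sum>u\<in>U'. B u * c u) = (\<Sum>u\<in>U'. B u * c' u)"
        by (rule sum.cong) (auto simp: c_def U'_def)
      finally show ?thesis by (simp add: c_def)
    qed
    have row_e: "(\<Sum>u\<in>U. A e u * c u) = 0"
      unfolding split using u0(2) by (simp add: s_def)
    have row_E: "(\<Sum>u\<in>U. A e' u * c u) = 0" if "e' \<in> E" for e'
    proof -
      have "0 = (\<Sum>u\<in>U'. A' e' u * c' u)" using c'(2) that by simp
      also have "\<dots> = (\<Sum>u\<in>U'. A e' u * c' u) - A e' u0 / A e u0 * s"
        by (simp add: A'_def s_def algebra_simps sum_subtractf sum_distrib_left sum_divide_distrib)
      also have "\<dots> = (\<Sum>u\<in>U. A e' u * c u)"
        unfolding split by (simp add: algebra_simps)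
      finally show ?thesis by simp
    qed
    have nz: "\<exists>u\<in>U. c u \<noteq> 0"
      using c'(1) by (auto simp: c_def U'_def)
    show ?thesis using nz row_e row_E by (intro exI[of _ c]) auto
  qed
qed


lemma linear_functional:
  fixes \<Phi> :: "('u \<Rightarrow> 'a::field) \<Rightarrow> 'a"
  assumes fin: "finite U"
    and add: "\<And>c1 c2. \<Phi> (\<lambda>v. c1 v + c2 v) = \<Phi> c1 + \<Phi> c2"
    and sc: "\<And>s c. \<Phi> (\<lambda>v. s * c v) = s * \<Phi> c"
    and loc: "\<And>c c'. (\<forall>v\<in>U. c v = c' v) \<Longrightarrow> \<Phi> c = \<Phi> c'"
  shows "\<Phi> c = (\<Sum>u\<in>U. c u * \<Phi> (\<lambda>v. if v = u then 1 else 0))"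
proof -
  have z: "\<Phi> (\<lambda>v. 0) = 0" using sc[of 0 "\<lambda>v. 0"] by simp
  have gen: "\<Phi> (\<lambda>v. \<Sum>u\<in>S. f u v) = (\<Sum>u\<in>S. \<Phi> (f u))" if "finite S" for S and f :: "'u \<Rightarrow> 'u \<Rightarrow> 'a"
    using that
  proof (induction S rule: finite_induct)
    case empty then show ?case using z by simp
  next
    case (insert x F)
    have "\<Phi> (\<lambda>v. \<Sum>u\<in>insert x F. f u v) = \<Phi> (\<lambda>v. f x v + (\<Sum>u\<in>F. f u v))"
      using insert.hyps by simp
    also have "\<dots> = \<Phi> (f x) + \<Phi> (\<lambda>v. \<Sum>u\<in>F. f u v)" by (rule add)
    finally show ?case using insert by simp
  qed
  have "\<Phi> c = \<Phi> (\<lambda>v. \<Sum>u\<in>U. c u * (if v = u then 1 else 0))"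
    by (rule loc) (simp add: fin if_distrib sum.delta' cong: if_cong)
  also have "\<dots> = (\<Sum>u\<in>U. \<Phi> (\<lambda>v. c u * (if v = u then 1 else 0)))"
    by (rule gen[OF fin])
  also have "\<dots> = (\<Sum>u\<in>U. c u * \<Phi> (\<lambda>v. if v = u then 1 else 0))"
    by (rule sum.cong[OF refl]) (rule sc)
  finally show ?thesis .
qed

definition mi :: "nat \<Rightarrow> ((nat \<times> nat) + (nat \<times> nat \<times> nat) \<Rightarrow> 'a::comm_monoid_add) \<Rightarrow> nat \<Rightarrow> 'a poly" where
  "mi d c i = (\<Sum>j\<le>d. monom (c (Inl (i, j))) j)"

definition Zf :: "'a::idom poly poly \<Rightarrow> 'a poly poly \<Rightarrow> nat \<Rightarrow> 'a poly poly" where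
  "Zf P L e = pderiv P ^ e * lr L"

definition T1 :: "'a::idom poly poly \<Rightarrow> 'a poly poly \<Rightarrow> nat \<Rightarrow> nat \<Rightarrow> nat
   \<Rightarrow> ((nat \<times> nat) + (nat \<times> nat \<times> nat) \<Rightarrow> 'a) \<Rightarrow> nat \<Rightarrow> 'a poly poly" where
  "T1 P L e r d c a = (\<Sum>i\<le>r. [:mi d c i:] * Zf P L e ^ (r - i) * Aseq P L e i a)"

definition T2 :: "nat \<Rightarrow> nat \<Rightarrow> ((nat \<times> nat) + (nat \<times> nat \<times> nat) \<Rightarrow> 'a::comm_monoid_add) \<Rightarrow> nat \<Rightarrow> 'a poly poly" where
  "T2 bx yb c a = (\<Sum>j\<le>bx. \<Sum>k\<le>yb. monom (monom (c (Inr (a, j, k))) j) k)"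

definition Qf where
  "Qf P L e r d bx yb c a = T1 P L e r d c a - P * T2 bx yb c a"

lemma smult_sum_r: "smult c (\<Sum>i\<in>S. f i) = (\<Sum>i\<in>S. smult c (f i))"
  by (induct S rule: infinite_finite_induct) (simp_all add: smult_add_right)
lemma ss_aux: "smult (smult s m) q = smult [:s:] (smult m q)"
  by simp
lemma mm_sc: "monom (monom (s*x) j) k = smult [:s:] (monom (monom x j) k)"
  by (simp add: smult_monom)
lemma mm_add: "monom (monom (x+y) j) k = monom (monom x j) k + monom (monom y j) k"
  by (simp add: add_monom)
lemma mi_add: "mi d (\<lambda>v. c1 v + c2 v) i = mi d c1 i + mi d c2 i"
  by (simp add: mi_def sum.distrib add_monom[symmetric])
lemma mi_sc: "mi d (\<lambda>v. s * c v) i = smult s (mi d c i)"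
  by (simp add: mi_def smult_sum_r smult_monom)
lemma T2_add: "T2 bx yb (\<lambda>v. c1 v + c2 v) a = T2 bx yb c1 a + T2 bx yb c2 a"
  by (simp add: T2_def sum.distrib mm_add)
lemma T2_sc: "T2 bx yb (\<lambda>v. s * c v) a = smult [:s:] (T2 bx yb c a)"
  by (simp add: T2_def smult_sum_r mm_sc)
lemma T1_add: "T1 P L e r d (\<lambda>v. c1 v + c2 v) a = T1 P L e r d c1 a + T1 P L e r d c2 a"
  by (simp add: T1_def mi_add sum.distrib[symmetric] smult_add_left distrib_right)
lemma T1_sc: "T1 P L e r d (\<lambda>v. s * c v) a = smult [:s:] (T1 P L e r d c a)"
  by (simp add: T1_def mi_sc smult_sum_r ss_aux del: smult_smult)
lemma Qf_add: "Qf P L e r d bx yb (\<lambda>v. c1 v + c2 v) a = Qf P L e r d bx yb c1 a + Qf P L e r d bx yb c2 a"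
  by (simp add: Qf_def T1_add T2_add algebra_simps)
lemma Qf_sc: "Qf P L e r d bx yb (\<lambda>v. s * c v) a = smult [:s:] (Qf P L e r d bx yb c a)"
  by (simp add: Qf_def T1_sc T2_sc smult_diff_right)

definition Uset :: "nat \<Rightarrow> nat \<Rightarrow> nat \<Rightarrow> nat \<Rightarrow> nat \<Rightarrow> ((nat \<times> nat) + (nat \<times> nat \<times> nat)) set" where
  "Uset r d rL bx yb = Inl ` ({..r} \<times> {..d}) \<union> Inr ` ({..<rL} \<times> {..bx} \<times> {..yb})"

lemma Qf_loc:
  assumes "\<forall>v\<in>Uset r d rL bx yb. c v = c' v" and "a < rL"
  shows "Qf P L e r d bx yb c a = Qf P L e r d bx yb c' a"
proof -
  have "mi d c i = mi d c' i" if "i \<le> r" for i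
    unfolding mi_def using assms that by (intro sum.cong) (auto simp: Uset_def)
  hence "T1 P L e r d c a = T1 P L e r d c' a" unfolding T1_def by (intro sum.cong) auto
  moreover have "T2 bx yb c a = T2 bx yb c' a"
    unfolding T2_def using assms by (intro sum.cong) (auto simp: Uset_def)
  ultimately show ?thesis by (simp add: Qf_def)
qed

lemma Qf_coeff_linear:
  fixes P L :: "'a::field poly poly"
  assumes "a < rL"
  shows "coeff (coeff (Qf P L e r d bx yb c a) k) j =
    (\<Sum>u\<in>Uset r d rL bx yb. c u * coeff (coeff (Qf P L e r d bx yb (\<lambda>v. if v = u then 1 else 0) a) k) j)"
proof (rule linear_functional[where \<Phi> = "\<lambda>c. coeff (coeff (Qf P L e r d bx yb c a) k) j"])
  show "finite (Uset r d rL bx yb)" by (simp add: Uset_def)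
  show "coeff (coeff (Qf P L e r d bx yb (\<lambda>v. c1 v + c2 v) a) k) j =
      coeff (coeff (Qf P L e r d bx yb c1 a) k) j + coeff (coeff (Qf P L e r d bx yb c2 a) k) j" for c1 c2
    by (simp add: Qf_add)
  show "coeff (coeff (Qf P L e r d bx yb (\<lambda>v. s * c v) a) k) j = s * coeff (coeff (Qf P L e r d bx yb c a) k) j" for s c
    by (simp add: Qf_sc)
  show "coeff (coeff (Qf P L e r d bx yb c a) k) j = coeff (coeff (Qf P L e r d bx yb c' a) k) j"
    if "\<forall>v\<in>Uset r d rL bx yb. c v = c' v" for c c'
    using Qf_loc[OF that assms] by simp
qed


lemma coeff_mi: "coeff (mi d c i) j = (if j \<le> d then c (Inl (i, j)) else 0)"
  by (simp add: mi_def coeff_sum coeff_monom)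

lemma degree_mi: "degree (mi d c i) \<le> d"
  unfolding mi_def by (rule degree_sum_le) (auto intro: order_trans[OF degree_monom_le])

lemma coeff_T2: "coeff (coeff (T2 bx yb c a) k) j = (if j \<le> bx \<and> k \<le> yb then c (Inr (a, j, k)) else 0)"
proof -
  have "coeff (coeff (T2 bx yb c a) k) j = (\<Sum>j'\<le>bx. \<Sum>k'\<le>yb. coeff (coeff (monom (monom (c (Inr (a, j', k'))) j') k') k) j)"
    unfolding T2_def coeff_sum ..
  also have "\<dots> = (\<Sum>j'\<le>bx. \<Sum>k'\<le>yb. if k' = k then (if j' = j then c (Inr (a, j', k')) else 0) else 0)"
    by (intro sum.cong refl) (simp add: coeff_monom)
  also have "\<dots> = (\<Sum>j'\<le>bx. if k \<le> yb then (if j' = j then c (Inr (a, j', k)) else 0) else 0)"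
    by (intro sum.cong refl) (simp add: sum.delta)
  also have "\<dots> = (if j \<le> bx \<and> k \<le> yb then c (Inr (a, j, k)) else 0)"
    by (cases "k \<le> yb") (simp_all add: sum.delta)
  finally show ?thesis .
qed

lemma bideg_T2: "bideg (T2 bx yb c a) bx yb"
  unfolding bideg_def
proof safe
  show "degree (T2 bx yb c a) \<le> yb"
    by (rule degree_le) (auto simp: poly_eq_iff coeff_T2)
  fix k show "degree (coeff (T2 bx yb c a) k) \<le> bx"
    by (rule degree_le) (auto simp: coeff_T2)
qed

lemma bideg_zero_eq:
  assumes "bideg Q xx yy" and "\<forall>j\<le>xx. \<forall>k\<le>yy. coeff (coeff Q k) j = 0"
  shows "Q = 0"
proof (rule poly_eqI)
  fix k
  show "coeff Q k = coeff 0 k"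
  proof (cases "k \<le> yy")
    case True
    show ?thesis
    proof (simp, rule poly_eqI)
      fix j
      show "coeff (coeff Q k) j = coeff 0 j"
      proof (cases "j \<le> xx")
        case True
        then show ?thesis using assms \<open>k \<le> yy\<close> by simp
      next
        case False
        have "degree (coeff Q k) \<le> xx" using assms(1) by (simp add: bideg_def)
        then show ?thesis using False by (simp add: coeff_eq_0)
      qed
    qed
  next
    case False
    then show ?thesis using assms(1) by (simp add: bideg_def coeff_eq_0)
  qed
qed

definition Mop :: "nat \<Rightarrow> nat \<Rightarrow> ((nat \<times> nat) + (nat \<times> nat \<times> nat) \<Rightarrow> 'a::comm_monoid_add) \<Rightarrow> 'a poly poly" where
  "Mop r d c = (\<Sum>i\<le>r. monom (mi d c i) i)"

lemma coeff_Mop: "coeff (Mop r d c) k = (if k \<le> r then mi d c k else 0)"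
  by (simp add: Mop_def coeff_sum coeff_monom)

lemma degree_Mop: "degree (Mop r d c) \<le> r"
  by (rule degree_le) (simp add: coeff_Mop)

lemma op_degree_Mop: "op_degree (Mop r d c) \<le> d"
  unfolding op_degree_def
  by (rule Max.boundedI) (auto simp: coeff_Mop degree_mi)

lemma apply_op_Mop:
  "apply_op x0 (Mop r d c) h = (\<Sum>i\<le>r. poly_at x0 (mi d c i) * (fps_deriv ^^ i) h)"
proof -
  have "apply_op x0 (Mop r d c) h = (\<Sum>k\<le>degree (Mop r d c). poly_at x0 (coeff (Mop r d c) k) * (fps_deriv ^^ k) h)"
    by (simp add: apply_op_def)
  also have "\<dots> = (\<Sum>k\<le>r. poly_at x0 (coeff (Mop r d c) k) * (fps_deriv ^^ k) h)"
  proof (rule sum.mono_neutral_left)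
    show "\<forall>i\<in>{..r} - {..degree (Mop r d c)}. poly_at x0 (coeff (Mop r d c) i) * (fps_deriv ^^ i) h = 0"
      by (auto simp: coeff_eq_0)
  qed (use degree_Mop in auto)
  also have "\<dots> = (\<Sum>i\<le>r. poly_at x0 (mi d c i) * (fps_deriv ^^ i) h)"
    by (intro sum.cong refl) (simp add: coeff_Mop)
  finally show ?thesis .
qed


lemma card_Uset: "card (Uset r d rL bx yb) = (r+1)*(d+1) + rL*((bx+1)*(yb+1))"
proof -
  have "card (Uset r d rL bx yb) = card (Inl ` ({..r} \<times> {..d}) :: ((nat \<times> nat) + (nat \<times> nat \<times> nat)) set)
       + card (Inr ` ({..<rL} \<times> {..bx} \<times> {..yb}) :: ((nat \<times> nat) + (nat \<times> nat \<times> nat)) set)"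
    unfolding Uset_def by (rule card_Un_disjoint) auto
  also have "\<dots> = (r+1)*(d+1) + rL*((bx+1)*(yb+1))"
    by (simp add: card_image card_cartesian_product)
  finally show ?thesis .
qed

lemma split_r: "i \<le> r \<Longrightarrow> (r - i) * x + x * i = x * (r::nat)"
  by (metis add.commute le_add_diff_inverse mult.commute distrib_left)

lemma core_exists:
  fixes L P :: "'a::field_char_0 poly poly" and rL dL rP dP r d e :: nat
  assumes rLdef: "degree L = rL" and rL1: "rL \<ge> 1"
    and hL: "\<forall>k. degree (coeff L k) \<le> dL"
    and rPdef: "degree P = rP" and rP1: "rP \<ge> 1" and hP: "bideg P dP rP"
    and e: "e = 2 \<or> e = 1 \<and> rP = 1"
    and XY: "dP \<le> d + e*dP*r" "rP \<le> (2*rP+dL-1)*r"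
    and count: "rL * ((d + e*dP*r + 1) * ((2*rP+dL-1)*r + 1))
        < (r+1)*(d+1) + rL * ((d + e*dP*r - dP + 1) * ((2*rP+dL-1)*r - rP + 1))"
  shows "\<exists>c. (\<exists>u\<in>Uset r d rL (d + e*dP*r - dP) ((2*rP+dL-1)*r - rP). c u \<noteq> 0) \<and>
      (\<forall>a<rL. T1 P L e r d c a = P * T2 (d + e*dP*r - dP) ((2*rP+dL-1)*r - rP) c a)"
proof -
  interpret degsetup P L dP rP dL using hP rP1 hL by unfold_locales
  define cyv where "cyv = 2*rP+dL-1"
  define XX where "XX = d + e*dP*r"
  define YY where "YY = cyv*r"
  define bx where "bx = XX - dP"
  define yb where "yb = YY - rP"
  define U where "U = Uset r d rL bx yb"
  define Eq where "Eq = {..<rL} \<times> {..XX} \<times> {..YY}"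
  define Mat where "Mat = (\<lambda>(a,j,k) u. coeff (coeff (Qf P L e r d bx yb (\<lambda>v. if v = u then 1 else 0) a) k) j)"
  have cardU: "card U = (r+1)*(d+1) + rL*((bx+1)*(yb+1))" unfolding U_def by (rule card_Uset)
  have cardE: "card Eq = rL * ((XX+1)*(YY+1))" by (simp add: Eq_def card_cartesian_product)
  have lt: "card Eq < card U" unfolding cardU cardE using count
    by (simp add: XX_def YY_def bx_def yb_def cyv_def)
  obtain c where cnz: "\<exists>u\<in>U. c u \<noteq> 0" and ceq: "\<forall>q\<in>Eq. (\<Sum>u\<in>U. Mat q u * c u) = 0"
    using homog_system[OF _ _ lt, of Mat] by (auto simp: Eq_def U_def Uset_def)
  have Qc: "coeff (coeff (Qf P L e r d bx yb c a) k) j = 0" if "a < rL" "j \<le> XX" "k \<le> YY" for a j k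
  proof -
    have "coeff (coeff (Qf P L e r d bx yb c a) k) j = (\<Sum>u\<in>U. Mat (a,j,k) u * c u)"
      unfolding Qf_coeff_linear[OF that(1), where P=P and L=L and e=e and r=r and d=d and bx=bx and yb=yb and c=c and k=k and j=j] U_def
      by (simp add: Mat_def mult.commute)
    also have "\<dots> = 0" using ceq that by (auto simp: Eq_def)
    finally show ?thesis .
  qed
  have hZ: "bideg (Zf P L e) (e*dP) cyv"
  proof -
    have "bideg (Zf P L e) (e*dP + 0) (e*(rP-1) + dL)"
      unfolding Zf_def by (rule bideg_mult[OF bideg_power[OF hPy] hlr])
    moreover have "e*(rP-1) + dL \<le> cyv" using e rP1 by (auto simp: cyv_def)
    ultimately show ?thesis by (auto intro: bideg_mono)
  qed
  have hA: "bideg (Aseq P L e i a) (e*dP*i) (cyv*i)" for i a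
    using Aseq_bideg[OF e] by (simp add: cyv_def)
  have hT1: "bideg (T1 P L e r d c a) XX YY" for a
    unfolding T1_def
  proof (rule bideg_sum)
    fix i assume "i \<in> {..r}"
    hence ir: "i \<le> r" by simp
    have "bideg ([:mi d c i:] * Zf P L e ^ (r - i) * Aseq P L e i a)
        (d + (r-i)*(e*dP) + e*dP*i) (0 + (r-i)*cyv + cyv*i)"
      by (rule bideg_mult[OF bideg_mult[OF bideg_const[OF degree_mi] bideg_power[OF hZ]] hA])
    thus "bideg ([:mi d c i:] * Zf P L e ^ (r - i) * Aseq P L e i a) XX YY"
      using split_r[OF ir, of "e*dP"] split_r[OF ir, of cyv]
      by (simp add: XX_def YY_def add.assoc mult.commute)
  qed
  have hPT2: "bideg (P * T2 bx yb c a) XX YY" for a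
  proof -
    have "bideg (P * T2 bx yb c a) (dP + bx) (rP + yb)" by (rule bideg_mult[OF hP bideg_T2])
    thus ?thesis using XY by (simp add: bx_def yb_def XX_def YY_def cyv_def)
  qed
  have "T1 P L e r d c a = P * T2 bx yb c a" if "a < rL" for a
  proof -
    have "Qf P L e r d bx yb c a = 0"
      by (rule bideg_zero_eq[of _ XX YY]) (use hT1 hPT2 Qc that in \<open>auto simp: Qf_def intro: bideg_diff\<close>)
    thus ?thesis by (simp add: Qf_def)
  qed
  thus ?thesis using cnz unfolding U_def bx_def yb_def XX_def YY_def cyv_def by blast
qed


lemma Pyy_zero: "degree P = 1 \<Longrightarrow> pderiv (pderiv (P :: 'a::idom poly poly)) = 0"
  by (intro poly_eqI) (simp add: coeff_pderiv coeff_eq_0)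

lemma main_op:
  fixes L P :: "'a::field_char_0 poly poly" and rL dL rP dP r d e :: nat
  assumes rLdef: "degree L = rL" and rL1: "rL \<ge> 1"
    and hL: "\<forall>k. degree (coeff L k) \<le> dL"
    and rPdef: "degree P = rP" and rP1: "rP \<ge> 1" and hP: "bideg P dP rP"
    and sf: "squarefree_over_Cx P" and nd: "no_y_divisor P"
    and e: "e = 2 \<or> e = 1 \<and> rP = 1"
    and XY: "dP \<le> d + e*dP*r" "rP \<le> (2*rP+dL-1)*r"
    and count: "rL * ((d + e*dP*r + 1) * ((2*rP+dL-1)*r + 1))
        < (r+1)*(d+1) + rL * ((d + e*dP*r - dP + 1) * ((2*rP+dL-1)*r - rP + 1))"
  shows "\<exists>M :: 'a diffop. M \<noteq> 0 \<and> op_order M \<le> r \<and> op_degree M \<le> d \<and>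
            (\<forall>\<alpha> g f. alg_solution \<alpha> P g \<and> op_solution (fps_nth g 0) L f
                 \<longrightarrow> op_solution \<alpha> M (comp_at f g))"
proof -
  define bx where "bx = d + e*dP*r - dP"
  define yb where "yb = (2*rP+dL-1)*r - rP"
  obtain c where cnz: "\<exists>u\<in>Uset r d rL bx yb. c u \<noteq> 0"
      and cT: "\<forall>a<rL. T1 P L e r d c a = P * T2 bx yb c a"
    using core_exists[OF rLdef rL1 hL rPdef rP1 hP e XY count] unfolding bx_def yb_def by blast
  define M where "M = Mop r d c"
  have P0: "P \<noteq> 0" using rPdef rP1 by auto
  have M0: "M \<noteq> 0"
  proof
    assume "M = 0"
    hence mi0: "mi d c i = 0" if "i \<le> r" for i
      using coeff_Mop[of r d c i] that by (simp add: M_def)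
    have cl: "c (Inl (i, j)) = 0" if "i \<le> r" "j \<le> d" for i j
      using arg_cong[OF mi0[OF that(1)], of "\<lambda>p. coeff p j"] that by (simp add: coeff_mi)
    have T10: "T1 P L e r d c a = 0" for a
      unfolding T1_def using mi0 by simp
    have cr: "c (Inr (a, j, k)) = 0" if "a < rL" "j \<le> bx" "k \<le> yb" for a j k
    proof -
      have "P * T2 bx yb c a = 0" using cT T10 that(1) by metis
      hence "T2 bx yb c a = 0" using P0 by simp
      hence "coeff (coeff (T2 bx yb c a) k) j = 0" by simp
      thus ?thesis using that by (simp add: coeff_T2)
    qed
    show False using cnz cl cr by (auto simp: Uset_def)
  qed
  have sem: "op_solution \<alpha> M (comp_at f g)"
    if as: "alg_solution \<alpha> P g" and os: "op_solution (g$0) L f" for \<alpha> g f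
  proof -
    have sol: "ev \<alpha> g P = 0" using as by (simp add: alg_solution_def ev_alt)
    have Lrel: "(\<Sum>k\<le>degree L. ev \<alpha> g (cy (coeff L k)) * Fk f g k) = 0"
      by (rule L_relation[OF os])
    have dL1: "degree L \<ge> 1" using rLdef rL1 by simp
    have p0: "ev \<alpha> g (pderiv P) \<noteq> 0" by (rule ev_Py_nonzero[OF sf sol])
    have lam0: "ev \<alpha> g (lr L) \<noteq> 0"
    proof
      assume z: "ev \<alpha> g (lr L) = 0"
      have L0: "coeff L (degree L) \<noteq> 0" using dL1 by auto
      have "g = fps_const (g$0)"
        using pc_zero_imp_const[OF L0] z by (simp add: lr_def ev_cy)
      hence "ev \<alpha> (fps_const (g$0)) P = 0" using sol by simp
      thus False using const_root_contra[OF nd] by blast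
    qed
    have e': "e = 1 \<and> pderiv (pderiv P) = 0 \<or> e = 2" using e Pyy_zero rPdef by auto
    define h where "h = comp_at f g"
    define z where "z = ev \<alpha> g (Zf P L e)"
    have z_eq: "z = ev \<alpha> g (pderiv P) ^ e * ev \<alpha> g (lr L)" by (simp add: z_def Zf_def)
    have z0: "z \<noteq> 0" using p0 lam0 by (simp add: z_eq)
    have rep: "(fps_deriv ^^ i) h * z ^ i = EE \<alpha> g f (degree L) (Aseq P L e i)" for i
    proof -
      have "(fps_deriv ^^ i) h * z ^ i = (fps_deriv ^^ i) h * ev \<alpha> g (pderiv P) ^ (e*i) * ev \<alpha> g (lr L) ^ i"
        by (simp add: z_eq power_mult_distrib power_mult mult.assoc)
      also have "\<dots> = EE \<alpha> g f (degree L) (Aseq P L e i)"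
        unfolding h_def by (rule Aseq_rep[OF sol Lrel dL1 p0 e'])
      finally show ?thesis .
    qed
    have "z ^ r * apply_op \<alpha> M h = (\<Sum>i\<le>r. poly_at \<alpha> (mi d c i) * z ^ (r - i) * ((fps_deriv ^^ i) h * z ^ i))"
      unfolding M_def apply_op_Mop sum_distrib_left
    proof (rule sum.cong[OF refl])
      fix i assume "i \<in> {..r}"
      hence "z ^ r = z ^ (r - i) * z ^ i" by (simp add: power_add[symmetric])
      thus "z ^ r * (poly_at \<alpha> (mi d c i) * (fps_deriv ^^ i) h) =
          poly_at \<alpha> (mi d c i) * z ^ (r - i) * ((fps_deriv ^^ i) h * z ^ i)"
        by (simp add: algebra_simps)
    qed
    also have "\<dots> = (\<Sum>i\<le>r. \<Sum>a<rL. ev \<alpha> g ([:mi d c i:] * Zf P L e ^ (r - i) * Aseq P L e i a) * Fk f g a)"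
      unfolding rep EE_def rLdef sum_distrib_left
      by (intro sum.cong refl) (simp add: z_def algebra_simps)
    also have "\<dots> = (\<Sum>a<rL. ev \<alpha> g (T1 P L e r d c a) * Fk f g a)"
      by (subst sum.swap) (simp add: T1_def sum_distrib_right)
    also have "\<dots> = 0"
      using cT sol by simp
    finally have "z ^ r * apply_op \<alpha> M h = 0" .
    hence "apply_op \<alpha> M h = 0" using z0 by simp
    thus ?thesis by (simp add: op_solution_def h_def)
  qed
  show ?thesis
    by (rule exI[of _ M]) (use M0 sem degree_Mop op_degree_Mop in \<open>auto simp: M_def op_order_def\<close>)
qed


lemma key_ineq:
  fixes rP dL e :: nat
  assumes rP1: "rP \<ge> 1" and e: "e = (if rP = 1 then 1 else 2)"
  shows "e*rP + (2*rP+dL-1) \<le> (3*rP+dL-1)*rP"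
proof (cases "rP = 1")
  case True then show ?thesis using e by simp
next
  case False
  hence r2: "rP \<ge> 2" using rP1 by simp
  have a: "rP*rP \<ge> 2*rP" using r2 by simp
  have b: "dL*rP \<ge> dL" using rP1 by simp
  have eq: "(3*rP+dL-1)*rP = 3*(rP*rP) + dL*rP - rP" using rP1 by (simp add: algebra_simps diff_mult_distrib)
  have "e*rP + (2*rP+dL-1) = 4*rP + dL - 1" using False e by simp
  then show ?thesis using eq a b r2 by linarith
qed

lemma count_ok:
  fixes rL rP dL dP r d e :: nat
  assumes rL1: "rL \<ge> 1" and rP1: "rP \<ge> 1" and rr: "r \<ge> rL*rP" and e: "e = (if rP = 1 then 1 else 2)"
    and hyp: "d*(r+1) \<ge> d*(rL*rP) + r*(3*rP+dL-1)*dP*rL*rP"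
  shows "rL * ((d + e*dP*r + 1) * ((2*rP+dL-1)*r + 1))
        < (r+1)*(d+1) + rL * ((d + e*dP*r - dP + 1) * ((2*rP+dL-1)*r - rP + 1))"
proof -
  define cyv where "cyv = 2*rP+dL-1"
  define K where "K = 3*rP+dL-1"
  define bx where "bx = d + e*dP*r - dP"
  define yb where "yb = cyv*r - rP"
  have "rL*rP \<ge> 1" using rL1 rP1 by (simp add: Suc_le_eq)
  hence r1: "r \<ge> 1" using rr by linarith
  have e1: "e \<ge> 1" using e by auto
  have X: "d + e*dP*r = bx + dP"
  proof -
    have er: "e*r \<ge> 1" using e1 r1 by (simp add: Suc_le_eq)
    have "dP \<le> dP*(e*r)" using er by simp
    hence "dP \<le> e*dP*r" by (simp add: ac_simps)
    thus ?thesis unfolding bx_def by linarith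
  qed
  have Y: "cyv*r = yb + rP"
  proof -
    have "rP \<le> cyv" by (simp add: cyv_def)
    also have "\<dots> \<le> cyv*r" using r1 by simp
    finally show ?thesis by (simp add: yb_def)
  qed
  have ki: "e*rP + cyv \<le> K*rP" using key_ineq[OF rP1 e] by (simp add: cyv_def K_def)
  have ki2: "r*rL*dP*(e*rP + cyv) \<le> r*rL*dP*(K*rP)" using ki by (rule mult_le_mono2)
  have hyp': "d*(r+1) \<ge> d*(rL*rP) + r*K*dP*rL*rP" using hyp by (simp add: K_def)
  have eq1: "rL*((bx+1)*rP + dP*(yb+1) + dP*rP) + rL*dP*rP
      = rL*rP*d + rL*rP + r*rL*dP*(e*rP+cyv) + rL*dP"
  proof -
    have "(bx+1)*rP + dP*(yb+1) + dP*rP + dP*rP = rP*((bx+dP)+1) + dP*((yb+rP)+1)"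
      by (simp add: algebra_simps)
    also have "\<dots> = rP*(d + e*dP*r + 1) + dP*(cyv*r + 1)" unfolding X[symmetric] Y[symmetric] ..
    finally have "(bx+1)*rP + dP*(yb+1) + dP*rP + dP*rP = rP*(d + e*dP*r + 1) + dP*(cyv*r + 1)" .
    hence "rL*((bx+1)*rP + dP*(yb+1) + dP*rP + dP*rP) = rL*(rP*(d + e*dP*r + 1) + dP*(cyv*r + 1))" by simp
    thus ?thesis by (simp add: algebra_simps)
  qed
  have hyp2: "d*r + d \<ge> rL*rP*d + r*rL*dP*(K*rP)" using hyp' by (simp add: algebra_simps)
  have h3: "rL*rP \<le> r" using rr by simp
  have h4: "rL*dP \<le> rL*dP*rP" using rP1 by simp
  define W1 where "W1 = r*rL*dP*(e*rP+cyv)"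
  define W2 where "W2 = r*rL*dP*(K*rP)"
  define A1 where "A1 = rL*rP*d"
  define A2 where "A2 = rL*rP"
  define A3 where "A3 = rL*dP"
  define A4 where "A4 = rL*dP*rP"
  define T where "T = rL*((bx+1)*rP + dP*(yb+1) + dP*rP)"
  define DR where "DR = d*r"
  have "T < (r+1)*(d+1)"
  proof -
    have "(r+1)*(d+1) = DR + d + r + 1" by (simp add: DR_def algebra_simps)
    moreover have "T + A4 = A1 + A2 + W1 + A3" using eq1 by (simp add: T_def A1_def A2_def A3_def A4_def W1_def)
    moreover have "W1 \<le> W2" using ki2 by (simp add: W1_def W2_def)
    moreover have "DR + d \<ge> A1 + W2" using hyp2 by (simp add: DR_def A1_def W2_def)
    moreover have "A2 \<le> r" using h3 by (simp add: A2_def)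
    moreover have "A3 \<le> A4" using h4 by (simp add: A3_def A4_def)
    ultimately show ?thesis by linarith
  qed
  moreover have "rL * ((bx + dP + 1) * (yb + rP + 1)) = T + rL*((bx+1)*(yb+1))"
    by (simp add: T_def algebra_simps)
  ultimately have "rL * ((bx + dP + 1) * (yb + rP + 1)) < (r+1)*(d+1) + rL*((bx+1)*(yb+1))" by linarith
  thus ?thesis unfolding X[symmetric] cyv_def[symmetric] Y[symmetric] by (simp add: bx_def yb_def cyv_def)
qed


lemma op_one: "op_order (1 :: 'a::field diffop) = 0" "op_degree (1 :: 'a::field diffop) = 0"
  by (simp_all add: op_order_def op_degree_def)

lemma apply_op_one: "apply_op x0 (1 :: 'a::field diffop) h = h"
  by (simp add: apply_op_def)

theorem theorem3:
  fixes L :: "'a::field_char_0 diffop"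
    and P :: "'a poly poly"
    and rL dL rP dP r d :: nat
  assumes "op_order L = rL" and "coeff L rL \<noteq> 0"
    and "\<forall>k. degree (coeff L k) \<le> dL"
    and "deg_y P = rP" and "deg_x P = dP"
    and "squarefree_over_Cx P" and "no_y_divisor P"
    and "r \<ge> rL * rP"
    and "real d \<ge> real r * (3 * real rP + real dL - 1) * real dP * real rL * real rP
                    / (real r + 1 - real rL * real rP)"
  shows "(\<exists>M :: 'a diffop. M \<noteq> 0 \<and> op_order M \<le> r \<and> op_degree M \<le> d \<and>
            (\<forall>\<alpha> g f. alg_solution \<alpha> P g \<and> op_solution (fps_nth g 0) L f
                 \<longrightarrow> op_solution \<alpha> M (comp_at f g)))
      \<and> (\<exists>M :: 'a diffop. M \<noteq> 0 \<and> op_order M \<le> rL * rP \<and>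
            op_degree M \<le> (3 * rP + dL - 1) * dP * rL^2 * rP^2 \<and>
            (\<forall>\<alpha> g f. alg_solution \<alpha> P g \<and> op_solution (fps_nth g 0) L f
                 \<longrightarrow> op_solution \<alpha> M (comp_at f g)))"
proof -
  note A = assms
  have dL: "degree L = rL" using A(1) by (simp add: op_order_def)
  have dPy: "degree P = rP" using A(4) by (simp add: deg_y_def)
  have hP: "bideg P dP rP" using bideg_P[of P] A(4,5) by simp
  have P0: "P \<noteq> 0"
  proof
    assume "P = 0"
    hence "map_poly (\<lambda>c. [:c:]) [:0, 1 :: 'a alg_closure:] dvd map_poly (map_poly to_ac) P" by simp
    moreover have "degree [:0, 1 :: 'a alg_closure:] > 0" by simp
    ultimately show False using A(7) unfolding no_y_divisor_def by blast
  qed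
  have triv: "\<forall>\<alpha> g f. alg_solution \<alpha> P g \<and> op_solution (fps_nth g 0) L f
                 \<longrightarrow> op_solution \<alpha> 1 (comp_at f g)" if rz: "rL = 0 \<or> rP = 0"
  proof (intro allI impI, elim conjE)
    fix \<alpha> g f assume as: "alg_solution \<alpha> P g" and os: "op_solution (fps_nth g 0) L f"
    show "op_solution \<alpha> 1 (comp_at f g)"
    proof (cases "rP = 0")
      case True
      have "poly_at \<alpha> (coeff P 0) = 0" using as True dPy by (simp add: alg_solution_def)
      hence "coeff P 0 = 0" by simp
      hence "P = 0" using True dPy by (metis degree_0_id pCons_0_0)
      thus ?thesis using P0 by simp
    next
      case False
      hence r0: "rL = 0" using rz by simp
      have "poly_at (g$0) (coeff L 0) * f = 0" using os r0 dL by (simp add: op_solution_def apply_op_def)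
      moreover have "coeff L 0 \<noteq> 0" using A(2) r0 by simp
      ultimately have "f = 0" by simp
      thus ?thesis by (simp add: op_solution_def apply_op_one comp_at_def fps_compose_0)
    qed
  qed
  show ?thesis
  proof (cases "rL = 0 \<or> rP = 0")
    case True
    have ex1: "\<exists>M :: 'a diffop. M \<noteq> 0 \<and> op_order M \<le> n \<and> op_degree M \<le> m \<and>
            (\<forall>\<alpha> g f. alg_solution \<alpha> P g \<and> op_solution (fps_nth g 0) L f
                 \<longrightarrow> op_solution \<alpha> M (comp_at f g))" for n m
      by (rule exI[of _ 1]) (use triv[OF True] in \<open>simp add: op_one\<close>)
    show ?thesis using ex1 by blast
  next
    case False
    hence rL1: "rL \<ge> 1" and rP1: "rP \<ge> 1" by auto
    define e :: nat where "e = (if rP = 1 then 1 else 2)"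
    have e': "e = 2 \<or> e = 1 \<and> rP = 1" by (simp add: e_def)
    have gen: "\<exists>M :: 'a diffop. M \<noteq> 0 \<and> op_order M \<le> r' \<and> op_degree M \<le> d' \<and>
            (\<forall>\<alpha> g f. alg_solution \<alpha> P g \<and> op_solution (fps_nth g 0) L f
                 \<longrightarrow> op_solution \<alpha> M (comp_at f g))"
      if rr: "r' \<ge> rL*rP" and hyp: "d'*(r'+1) \<ge> d'*(rL*rP) + r'*(3*rP+dL-1)*dP*rL*rP" for r' d'
    proof (rule main_op[OF dL rL1 A(3) dPy rP1 hP A(6) A(7) e'])
      have "rL*rP \<ge> 1" using rL1 rP1 by (simp add: Suc_le_eq)
      hence r1: "r' \<ge> 1" using rr by linarith
      have "e*r' \<ge> 1" using r1 e' by (auto simp: Suc_le_eq)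
      hence "dP \<le> dP*(e*r')" by simp
      hence "dP \<le> e*dP*r'" by (simp add: ac_simps)
      thus "dP \<le> d' + e*dP*r'" by linarith
      have "rP \<le> 2*rP+dL-1" by simp
      also have "\<dots> \<le> (2*rP+dL-1)*r'" using r1 by simp
      finally show "rP \<le> (2*rP+dL-1)*r'" .
      show "rL * ((d' + e*dP*r' + 1) * ((2*rP+dL-1)*r' + 1))
        < (r'+1)*(d'+1) + rL * ((d' + e*dP*r' - dP + 1) * ((2*rP+dL-1)*r' - rP + 1))"
        by (rule count_ok[OF rL1 rP1 rr e_def hyp])
    qed
    have part1: "d*(r+1) \<ge> d*(rL*rP) + r*(3*rP+dL-1)*dP*rL*rP"
    proof -
      define K :: nat where "K = 3*rP+dL-1"
      have rK: "real K = 3 * real rP + real dL - 1" using rP1 by (simp add: K_def of_nat_diff)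
      have den: "real r + 1 - real rL * real rP > 0"
      proof -
        have "real rL * real rP \<le> real r" using A(8) by (metis of_nat_le_iff of_nat_mult)
        thus ?thesis by linarith
      qed
      have "real r * real K * real dP * real rL * real rP \<le> real d * (real r + 1 - real rL * real rP)"
        using A(9) den rK by (simp add: pos_divide_le_eq)
      hence "real (d*(rL*rP) + r*K*dP*rL*rP) \<le> real (d*(r+1))"
        by (simp add: algebra_simps)
      thus ?thesis unfolding K_def of_nat_le_iff .
    qed
    have p2: "(K*dP*rL^2*rP^2)*(rL*rP+1) \<ge> (K*dP*rL^2*rP^2)*(rL*rP) + (rL*rP)*K*dP*rL*rP" for K :: nat
      by (simp add: algebra_simps power2_eq_square)
    have part2: "((3*rP+dL-1)*dP*rL^2*rP^2)*(rL*rP+1) \<ge> ((3*rP+dL-1)*dP*rL^2*rP^2)*(rL*rP)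
         + (rL*rP)*(3*rP+dL-1)*dP*rL*rP"
      by (rule p2)
    show ?thesis using gen[OF A(8) part1] gen[OF order_refl part2] by blast
  qed
qed


end
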